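(* Let $H$ be the 28-element set $H=\{n_M : n\in\mathbb{Z}_{12}\}\cup\{n_m : n\in\mathbb{Z}_{12}\}\cup\{n_{\mathrm{aug}} : n\in\{0,1,2,3\}\}$, and define three relations on $H$: - $\mathcal{P}$ is the symmetric relation consisting exactly of the pairs $(n_M,n_m)$ and $(n_m,n_M)$ for $n\in\mathbb{Z}_{12}$, together with the pairs $(n_{\mathrm{aug}},n_{\mathrm{aug}})$ for $0\le n\le 3$; - $\mathcal{L}$ is the symmetric relation consisting exactly of the pairs $(n_M,(n+4)_m)$ and $((n+4)_m,n_M)$ for $n\in\mathbb{Z}_{12}$, together with the pairs $(n_{\mathrm{aug}},n_{\mathrm{aug}})$ for $0\le n\le 3$; - $\mathcal{U}$ is the symmetric relation consisting exactly of the pairs $(n_M,(n \bmod 4)_{\mathrm{aug}})$, $(n_m,((n+3)\bmod 4)_{\mathrm{aug}})$ for $n\in\mathbb{Z}_{12}$, together with their reverses. Let $M_{\mathcal{UPL}}$ be the monoid of relations on $H$ generated by $\mathcal{U},\mathcal{P},\mathcal{L}$ under composition of relations (with identity $e$ the identity relation). Then $M_{\mathcal{UPL}}$ has 40 elements and has the presentation $$M_{\mathcal{UPL}}=\langle \mathcal{U},\mathcal{P},\mathcal{L}\mid \mathcal{P}^2=\mathcal{L}^2=e,\ \mathcal{LPL}=\mathcal{PLP},\ \mathcal{U}^3=\mathcal{U},\ \mathcal{UP}=\mathcal{UL},\ \mathcal{PU}=\mathcal{LU},\ \mathcal{U}^2\mathcal{PU}^2=\mathcal{P}\mathcal{U}^2\mathcal{PU}^2\mathcal{P},\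 (\mathcal{UP})^2\mathcal{U}^2=\mathcal{P}(\mathcal{UP})^2\mathcal{U}^2\mathcal{P},\ \mathcal{U}^2(\mathcal{PU})^2=\mathcal{P}\mathcal{U}^2(\mathcal{PU})^2\mathcal{P}\rangle.$$
   Context: Indices $n$ of $n_M,n_m$ are taken modulo 12. The elements of $H$ are formal labels (musically, $n_M$ is the major triad $\{n,n+4,n+7\}$, $n_m$ the minor triad $\{n,n+3,n+7\}$, and $k_{\mathrm{aug}}$ the augmented triad $\{k,k+4,k+8\}$, all in $\mathbb{Z}_{12}$). Composition of relations: for relations $\mathcal{R},\mathcal{R}'$ on $H$, $\mathcal{R}'\mathcal{R}=\mathcal{R}'\circ\mathcal{R}$ is the set of pairs $(x,z)$ such that there exists $y$ with $(x,y)\in\mathcal{R}$ and $(y,z)\in\mathcal{R}'$. Juxtaposition of words in the presentation denotes this composition. *)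

theory Defs
  imports Main
begin

text \<open>Triads: Maj n = n_M, Min n = n_m (n in {0..11} representing Z_12),
  Aug k = k_aug (k in {0..3}).\<close>
datatype triad = Maj int | Min int | Aug int

definition H :: "triad set" where
  "H = {Maj n | n. 0 \<le> n \<and> n < 12} \<union> {Min n | n. 0 \<le> n \<and> n < 12}
       \<union> {Aug n | n. 0 \<le> n \<and> n \<le> 3}"

definition relP :: "triad rel" where
  "relP = {(Maj n, Min n) | n. 0 \<le> n \<and> n < 12} \<union> {(Min n, Maj n) | n. 0 \<le> n \<and> n < 12}
          \<union> {(Aug n, Aug n) | n. 0 \<le> n \<and> n \<le> 3}"

definition relL :: "triad rel" where
  "relL = {(Maj n, Min ((n + 4) mod 12)) | n. 0 \<le> n \<and> n < 12}
          \<union> {(Min ((n + 4) mod 12), Maj n) | n. 0 \<le> n \<and> n < 12}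
          \<union> {(Aug n, Aug n) | n. 0 \<le> n \<and> n \<le> 3}"

definition relU :: "triad rel" where
  "relU = {(Maj n, Aug (n mod 4)) | n. 0 \<le> n \<and> n < 12}
          \<union> {(Min n, Aug ((n + 3) mod 4)) | n. 0 \<le> n \<and> n < 12}
          \<union> {(Aug (n mod 4), Maj n) | n. 0 \<le> n \<and> n < 12}
          \<union> {(Aug ((n + 3) mod 4), Min n) | n. 0 \<le> n \<and> n < 12}"

text \<open>Composition as in the paper: R' R = {(x,z). \<exists>y. (x,y)\<in>R \<and> (y,z)\<in>R'},
  which is Isabelle's  R O R'.\<close>
definition comp_rel :: "triad rel \<Rightarrow> triad rel \<Rightarrow> triad rel" where
  "comp_rel R' R = R O R'"

inductive_set M_UPL :: "triad rel set" where
  e: "Id_on H \<in> M_UPL"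
| step: "A \<in> M_UPL \<Longrightarrow> G \<in> {relU, relP, relL} \<Longrightarrow> comp_rel G A \<in> M_UPL"

datatype gen = gU | gP | gL

fun gen_rel :: "gen \<Rightarrow> triad rel" where
  "gen_rel gU = relU" | "gen_rel gP = relP" | "gen_rel gL = relL"

fun eval_word :: "gen list \<Rightarrow> triad rel" where
  "eval_word [] = Id_on H"
| "eval_word (x # w) = comp_rel (gen_rel x) (eval_word w)"

definition upl_relations :: "(gen list \<times> gen list) set" where
  "upl_relations =
    { ([gP, gP], []),
      ([gL, gL], []),
      ([gL, gP, gL], [gP, gL, gP]),
      ([gU, gU, gU], [gU]),
      ([gU, gP], [gU, gL]),
      ([gP, gU], [gL, gU]),
      ([gU, gU, gP, gU, gU], [gP, gU, gU, gP, gU, gU, gP]),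
      ([gU, gP, gU, gP, gU, gU], [gP, gU, gP, gU, gP, gU, gU, gP]),
      ([gU, gU, gP, gU, gP, gU], [gP, gU, gU, gP, gU, gP, gU, gP]) }"

inductive upl_cong :: "gen list \<Rightarrow> gen list \<Rightarrow> bool" where
  base: "(l, r) \<in> upl_relations \<Longrightarrow> upl_cong (a @ l @ b) (a @ r @ b)"
| refl: "upl_cong w w"
| sym: "upl_cong v w \<Longrightarrow> upl_cong w v"
| trans: "upl_cong u v \<Longrightarrow> upl_cong v w \<Longrightarrow> upl_cong u w"

end

theory Submission
  imports Defs
begin

definition Hlist :: "triad list" where
  "Hlist = map Maj [0..11] @ map Min [0..11] @ map Aug [0..3]"

definition Ulist :: "(triad \<times> triad) list" where
  "Ulist = map (\<lambda>n. (Maj n, Aug (n mod 4))) [0..11] @ map (\<lambda>n. (Min n, Aug ((n + 3) mod 4))) [0..11]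
         @ map (\<lambda>n. (Aug (n mod 4), Maj n)) [0..11] @ map (\<lambda>n. (Aug ((n + 3) mod 4), Min n)) [0..11]"
definition Plist :: "(triad \<times> triad) list" where
  "Plist = map (\<lambda>n. (Maj n, Min n)) [0..11] @ map (\<lambda>n. (Min n, Maj n)) [0..11] @ map (\<lambda>n. (Aug n, Aug n)) [0..3]"
definition Llist :: "(triad \<times> triad) list" where
  "Llist = map (\<lambda>n. (Maj n, Min ((n + 4) mod 12))) [0..11] @ map (\<lambda>n. (Min ((n + 4) mod 12), Maj n)) [0..11]
         @ map (\<lambda>n. (Aug n, Aug n)) [0..3]"

lemma int_range12: "{n::int. 0 \<le> n \<and> n < 12} = set [0..11]" by auto
lemma int_range4: "{n::int. 0 \<le> n \<and> n \<le> 3} = set [0..3]" by auto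

lemma setcomp_img: "{f n | n. P n} = f ` {n. P n}" by auto

lemma H_eq: "H = set Hlist"
  unfolding H_def Hlist_def set_append set_map
  by (simp only: setcomp_img int_range12 int_range4 Un_assoc)

lemma U_eq: "relU = set Ulist"
  unfolding relU_def Ulist_def set_append set_map
  by (simp only: setcomp_img[where f="\<lambda>n. (_ n, _ n)"] int_range12 Un_assoc)
lemma P_eq: "relP = set Plist"
  unfolding relP_def Plist_def set_append set_map
  by (simp only: setcomp_img[where f="\<lambda>n. (_ n, _ n)"] int_range12 int_range4 Un_assoc)
lemma L_eq: "relL = set Llist"
  unfolding relL_def Llist_def set_append set_map
  by (simp only: setcomp_img[where f="\<lambda>n. (_ n, _ n)"] int_range12 int_range4 Un_assoc)

definition NF :: "gen list list" where
 "NF = [[],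
  [gU],
  [gP],
  [gL],
  [gU, gU],
  [gP, gU],
  [gU, gP],
  [gL, gP],
  [gP, gL],
  [gP, gU, gU],
  [gU, gP, gU],
  [gU, gU, gP],
  [gP, gU, gP],
  [gP, gL, gP],
  [gU, gP, gU, gU],
  [gU, gU, gP, gU],
  [gP, gU, gP, gU],
  [gP, gU, gU, gP],
  [gU, gP, gU, gP],
  [gU, gU, gP, gU, gU],
  [gP, gU, gP, gU, gU],
  [gP, gU, gU, gP, gU],
  [gU, gP, gU, gP, gU],
  [gU, gP, gU, gU, gP],
  [gU, gU, gP, gU, gP],
  [gP, gU, gP, gU, gP],
  [gP, gU, gU, gP, gU, gU],
  [gU, gP, gU, gP, gU, gU],
  [gU, gP, gU, gU, gP, gU],
  [gP, gU, gP, gU, gP, gU],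
  [gP, gU, gP, gU, gU, gP],
  [gP, gU, gU, gP, gU, gP],
  [gU, gP, gU, gP, gU, gP],
  [gP, gU, gP, gU, gP, gU, gU],
  [gP, gU, gP, gU, gU, gP, gU],
  [gU, gP, gU, gP, gU, gP, gU],
  [gU, gP, gU, gU, gP, gU, gP],
  [gP, gU, gP, gU, gP, gU, gP],
  [gP, gU, gP, gU, gP, gU, gP, gU],
  [gP, gU, gP, gU, gU, gP, gU, gP]]"

definition certs :: "((gen \<times> gen list) \<times> gen list list) list" where
 "certs = [((gL, [gU]), [[gL, gU], [gP, gU]]),
  ((gP, [gP]), [[gP, gP], []]),
  ((gU, [gL]), [[gU, gL], [gU, gP]]),
  ((gL, [gL]), [[gL, gL], []]),
  ((gU, [gU, gU]), [[gU, gU, gU], [gU]]),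
  ((gL, [gU, gU]), [[gL, gU, gU], [gP, gU, gU]]),
  ((gP, [gP, gU]), [[gP, gP, gU], [gU]]),
  ((gL, [gP, gU]), [[gL, gP, gU], [gL, gL, gU], [gU]]),
  ((gL, [gU, gP]), [[gL, gU, gP], [gP, gU, gP]]),
  ((gU, [gL, gP]), [[gU, gL, gP], [gU, gP, gP], [gU]]),
  ((gL, [gL, gP]), [[gL, gL, gP], [gP]]),
  ((gU, [gP, gL]), [[gU, gP, gL], [gU, gL, gL], [gU]]),
  ((gP, [gP, gL]), [[gP, gP, gL], [gL]]),
  ((gL, [gP, gL]), [[gL, gP, gL], [gP, gL, gP]]),
  ((gP, [gP, gU, gU]), [[gP, gP, gU, gU], [gU, gU]]),
  ((gL, [gP, gU, gU]), [[gL, gP, gU, gU], [gL, gL, gU, gU], [gU, gU]]),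
  ((gL, [gU, gP, gU]), [[gL, gU, gP, gU], [gP, gU, gP, gU]]),
  ((gU, [gU, gU, gP]), [[gU, gU, gU, gP], [gU, gP]]),
  ((gL, [gU, gU, gP]), [[gL, gU, gU, gP], [gP, gU, gU, gP]]),
  ((gP, [gP, gU, gP]), [[gP, gP, gU, gP], [gU, gP]]),
  ((gL, [gP, gU, gP]), [[gL, gP, gU, gP], [gL, gL, gU, gP], [gU, gP]]),
  ((gU, [gP, gL, gP]), [[gU, gP, gL, gP], [gU, gL, gL, gP], [gU, gP]]),
  ((gP, [gP, gL, gP]), [[gP, gP, gL, gP], [gL, gP]]),
  ((gL, [gP, gL, gP]), [[gL, gP, gL, gP], [gP, gL, gP, gP], [gP, gL]]),
  ((gL, [gU, gP, gU, gU]), [[gL, gU, gP, gU, gU], [gP, gU, gP, gU, gU]]),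
  ((gU, [gU, gU, gP, gU]), [[gU, gU, gU, gP, gU], [gU, gP, gU]]),
  ((gL, [gU, gU, gP, gU]), [[gL, gU, gU, gP, gU], [gP, gU, gU, gP, gU]]),
  ((gP, [gP, gU, gP, gU]), [[gP, gP, gU, gP, gU], [gU, gP, gU]]),
  ((gL, [gP, gU, gP, gU]), [[gL, gP, gU, gP, gU], [gL, gL, gU, gP, gU], [gU, gP, gU]]),
  ((gP, [gP, gU, gU, gP]), [[gP, gP, gU, gU, gP], [gU, gU, gP]]),
  ((gL, [gP, gU, gU, gP]), [[gL, gP, gU, gU, gP], [gL, gL, gU, gU, gP], [gU, gU, gP]]),
  ((gL, [gU, gP, gU, gP]), [[gL, gU, gP, gU, gP], [gP, gU, gP, gU, gP]]),
  ((gU, [gU, gU, gP, gU, gU]), [[gU, gU, gU, gP, gU, gU], [gU, gP, gU, gU]]),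
  ((gL, [gU, gU, gP, gU, gU]), [[gL, gU, gU, gP, gU, gU], [gP, gU, gU, gP, gU, gU]]),
  ((gP, [gP, gU, gP, gU, gU]), [[gP, gP, gU, gP, gU, gU], [gU, gP, gU, gU]]),
  ((gL, [gP, gU, gP, gU, gU]), [[gL, gP, gU, gP, gU, gU], [gL, gL, gU, gP, gU, gU], [gU, gP, gU, gU]]),
  ((gP, [gP, gU, gU, gP, gU]), [[gP, gP, gU, gU, gP, gU], [gU, gU, gP, gU]]),
  ((gL, [gP, gU, gU, gP, gU]), [[gL, gP, gU, gU, gP, gU], [gL, gL, gU, gU, gP, gU], [gU, gU, gP, gU]]),
  ((gU, [gU, gP, gU, gP, gU]), [[gU, gU, gP, gU, gP, gU], [gP, gU, gU, gP, gU, gP, gU, gP], [gP, gU, gU, gP, gU, gP, gU, gU, gU, gP], [gP, gP, gU, gU, gP, gU, gP, gU, gP, gU, gU, gP], [gU, gU, gP, gU, gP, gU, gP, gU, gU, gP], [gU, gU, gU, gP, gU, gP, gU, gU], [gU, gP, gU, gP, gU, gU]]),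
  ((gL, [gU, gP, gU, gP, gU]), [[gL, gU, gP, gU, gP, gU], [gP, gU, gP, gU, gP, gU]]),
  ((gU, [gU, gP, gU, gU, gP]), [[gU, gU, gP, gU, gU, gP], [gP, gU, gU, gP, gU, gU, gP, gP], [gP, gU, gU, gP, gU, gU]]),
  ((gL, [gU, gP, gU, gU, gP]), [[gL, gU, gP, gU, gU, gP], [gP, gU, gP, gU, gU, gP]]),
  ((gU, [gU, gU, gP, gU, gP]), [[gU, gU, gU, gP, gU, gP], [gU, gP, gU, gP]]),
  ((gL, [gU, gU, gP, gU, gP]), [[gL, gU, gU, gP, gU, gP], [gP, gU, gU, gP, gU, gP]]),
  ((gP, [gP, gU, gP, gU, gP]), [[gP, gP, gU, gP, gU, gP], [gU, gP, gU, gP]]),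
  ((gL, [gP, gU, gP, gU, gP]), [[gL, gP, gU, gP, gU, gP], [gL, gL, gU, gP, gU, gP], [gU, gP, gU, gP]]),
  ((gU, [gP, gU, gU, gP, gU, gU]), [[gU, gP, gU, gU, gP, gU, gU], [gU, gP, gP, gU, gU, gP, gU, gU, gP], [gU, gU, gU, gP, gU, gU, gP], [gU, gP, gU, gU, gP]]),
  ((gP, [gP, gU, gU, gP, gU, gU]), [[gP, gP, gU, gU, gP, gU, gU], [gU, gU, gP, gU, gU]]),
  ((gL, [gP, gU, gU, gP, gU, gU]), [[gL, gP, gU, gU, gP, gU, gU], [gL, gL, gU, gU, gP, gU, gU], [gU, gU, gP, gU, gU]]),
  ((gU, [gU, gP, gU, gP, gU, gU]), [[gU, gU, gP, gU, gP, gU, gU], [gU, gP, gU, gP, gU, gP, gU, gU, gP], [gU, gU, gU, gP, gU, gP, gU, gP, gU, gU, gP], [gU, gP, gU, gU, gP, gU, gP, gU, gP, gP, gU, gU, gP], [gU, gP, gU, gU, gP, gU, gP, gU, gU, gU, gP], [gU, gP, gU, gU, gP, gU, gP, gU, gP], [gU, gU, gU, gP, gU, gP, gU], [gU, gP, gU, gP, gU]]),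
  ((gL, [gU, gP, gU, gP, gU, gU]), [[gL, gU, gP, gU, gP, gU, gU], [gP, gU, gP, gU, gP, gU, gU]]),
  ((gU, [gU, gP, gU, gU, gP, gU]), [[gU, gU, gP, gU, gU, gP, gU], [gP, gU, gU, gP, gU, gU, gP, gP, gU], [gP, gU, gU, gP, gU, gU, gU], [gP, gU, gU, gP, gU]]),
  ((gL, [gU, gP, gU, gU, gP, gU]), [[gL, gU, gP, gU, gU, gP, gU], [gP, gU, gP, gU, gU, gP, gU]]),
  ((gP, [gP, gU, gP, gU, gP, gU]), [[gP, gP, gU, gP, gU, gP, gU], [gU, gP, gU, gP, gU]]),
  ((gL, [gP, gU, gP, gU, gP, gU]), [[gL, gP, gU, gP, gU, gP, gU], [gL, gL, gU, gP, gU, gP, gU], [gU, gP, gU, gP, gU]]),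
  ((gU, [gP, gU, gP, gU, gU, gP]), [[gU, gP, gU, gP, gU, gU, gP], [gP, gU, gP, gU, gP, gU, gU, gP, gP], [gP, gU, gP, gU, gP, gU, gU]]),
  ((gP, [gP, gU, gP, gU, gU, gP]), [[gP, gP, gU, gP, gU, gU, gP], [gU, gP, gU, gU, gP]]),
  ((gL, [gP, gU, gP, gU, gU, gP]), [[gL, gP, gU, gP, gU, gU, gP], [gL, gL, gU, gP, gU, gU, gP], [gU, gP, gU, gU, gP]]),
  ((gP, [gP, gU, gU, gP, gU, gP]), [[gP, gP, gU, gU, gP, gU, gP], [gU, gU, gP, gU, gP]]),
  ((gL, [gP, gU, gU, gP, gU, gP]), [[gL, gP, gU, gU, gP, gU, gP], [gL, gL, gU, gU, gP, gU, gP], [gU, gU, gP, gU, gP]]),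
  ((gU, [gU, gP, gU, gP, gU, gP]), [[gU, gU, gP, gU, gP, gU, gP], [gU, gU, gP, gU, gP, gU, gU, gU, gP], [gP, gU, gU, gP, gU, gP, gU, gP, gU, gU, gP], [gP, gU, gU, gU, gP, gU, gP, gU, gU], [gP, gU, gP, gU, gP, gU, gU]]),
  ((gL, [gU, gP, gU, gP, gU, gP]), [[gL, gU, gP, gU, gP, gU, gP], [gP, gU, gP, gU, gP, gU, gP]]),
  ((gU, [gP, gU, gP, gU, gP, gU, gU]), [[gU, gP, gU, gP, gU, gP, gU, gU], [gU, gP, gU, gU, gU, gP, gU, gP, gU, gU], [gU, gP, gU, gU, gP, gU, gP, gU, gP, gU, gU, gP], [gU, gU, gU, gP, gU, gP, gU, gU, gU, gP], [gU, gP, gU, gP, gU, gU, gU, gP], [gU, gP, gU, gP, gU, gP]]),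
  ((gP, [gP, gU, gP, gU, gP, gU, gU]), [[gP, gP, gU, gP, gU, gP, gU, gU], [gU, gP, gU, gP, gU, gU]]),
  ((gL, [gP, gU, gP, gU, gP, gU, gU]), [[gL, gP, gU, gP, gU, gP, gU, gU], [gL, gL, gU, gP, gU, gP, gU, gU], [gU, gP, gU, gP, gU, gU]]),
  ((gU, [gP, gU, gP, gU, gU, gP, gU]), [[gU, gP, gU, gP, gU, gU, gP, gU], [gP, gU, gP, gU, gP, gU, gU, gP, gP, gU], [gP, gU, gP, gU, gP, gU, gU, gU], [gP, gU, gP, gU, gP, gU]]),
  ((gP, [gP, gU, gP, gU, gU, gP, gU]), [[gP, gP, gU, gP, gU, gU, gP, gU], [gU, gP, gU, gU, gP, gU]]),
  ((gL, [gP, gU, gP, gU, gU, gP, gU]), [[gL, gP, gU, gP, gU, gU, gP, gU], [gL, gL, gU, gP, gU, gU, gP, gU], [gU, gP, gU, gU, gP, gU]]),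
  ((gU, [gU, gP, gU, gP, gU, gP, gU]), [[gU, gU, gP, gU, gP, gU, gP, gU], [gU, gU, gP, gU, gP, gU, gU, gU, gP, gU], [gP, gU, gU, gP, gU, gP, gU, gP, gU, gU, gP, gU], [gP, gU, gU, gU, gP, gU, gP, gU, gU, gU], [gP, gU, gP, gU, gP, gU, gU, gU], [gP, gU, gP, gU, gP, gU]]),
  ((gL, [gU, gP, gU, gP, gU, gP, gU]), [[gL, gU, gP, gU, gP, gU, gP, gU], [gP, gU, gP, gU, gP, gU, gP, gU]]),
  ((gU, [gU, gP, gU, gU, gP, gU, gP]), [[gU, gU, gP, gU, gU, gP, gU, gP], [gP, gU, gU, gP, gU, gU, gP, gP, gU, gP], [gP, gU, gU, gP, gU, gU, gU, gP], [gP, gU, gU, gP, gU, gP]]),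
  ((gL, [gU, gP, gU, gU, gP, gU, gP]), [[gL, gU, gP, gU, gU, gP, gU, gP], [gP, gU, gP, gU, gU, gP, gU, gP]]),
  ((gU, [gP, gU, gP, gU, gP, gU, gP]), [[gU, gP, gU, gP, gU, gP, gU, gP], [gU, gP, gU, gP, gU, gU, gU, gP, gU, gP], [gP, gU, gP, gU, gP, gU, gU, gP, gU, gP, gU, gP], [gP, gU, gP, gU, gU, gU, gP, gU, gP, gU], [gP, gU, gP, gU, gP, gU, gP, gU]]),
  ((gP, [gP, gU, gP, gU, gP, gU, gP]), [[gP, gP, gU, gP, gU, gP, gU, gP], [gU, gP, gU, gP, gU, gP]]),
  ((gL, [gP, gU, gP, gU, gP, gU, gP]), [[gL, gP, gU, gP, gU, gP, gU, gP], [gL, gL, gU, gP, gU, gP, gU, gP], [gU, gP, gU, gP, gU, gP]]),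
  ((gU, [gP, gU, gP, gU, gP, gU, gP, gU]), [[gU, gP, gU, gP, gU, gP, gU, gP, gU], [gU, gP, gU, gP, gU, gU, gU, gP, gU, gP, gU], [gP, gU, gP, gU, gP, gU, gU, gP, gU, gP, gU, gP, gU], [gP, gU, gP, gU, gU, gU, gP, gU, gP, gU, gU], [gP, gU, gP, gU, gU, gP, gU, gP, gU, gP, gU, gU, gP], [gP, gU, gU, gU, gP, gU, gP, gU, gU, gU, gP], [gP, gU, gP, gU, gP, gU, gU, gU, gP], [gP, gU, gP, gU, gP, gU, gP]]),
  ((gP, [gP, gU, gP, gU, gP, gU, gP, gU]), [[gP, gP, gU, gP, gU, gP, gU, gP, gU], [gU, gP, gU, gP, gU, gP, gU]]),
  ((gL, [gP, gU, gP, gU, gP, gU, gP, gU]), [[gL, gP, gU, gP, gU, gP, gU, gP, gU], [gL, gL, gU, gP, gU, gP, gU, gP, gU], [gU, gP, gU, gP, gU, gP, gU]]),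
  ((gU, [gP, gU, gP, gU, gU, gP, gU, gP]), [[gU, gP, gU, gP, gU, gU, gP, gU, gP], [gP, gU, gP, gU, gP, gU, gU, gP, gP, gU, gP], [gP, gU, gP, gU, gP, gU, gU, gU, gP], [gP, gU, gP, gU, gP, gU, gP]]),
  ((gP, [gP, gU, gP, gU, gU, gP, gU, gP]), [[gP, gP, gU, gP, gU, gU, gP, gU, gP], [gU, gP, gU, gU, gP, gU, gP]]),
  ((gL, [gP, gU, gP, gU, gU, gP, gU, gP]), [[gL, gP, gU, gP, gU, gU, gP, gU, gP], [gL, gL, gU, gP, gU, gU, gP, gU, gP], [gU, gP, gU, gU, gP, gU, gP]])]"

fun rl :: "gen \<Rightarrow> (triad \<times> triad) list" where
  "rl gU = Ulist" | "rl gP = Plist" | "rl gL = Llist"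

lemma rl_eq: "gen_rel x = set (rl x)"
  by (cases x) (simp_all add: U_eq P_eq L_eq)

definition gimg :: "gen \<Rightarrow> triad \<Rightarrow> triad list" where
  "gimg x b = map snd (filter (\<lambda>p. fst p = b) (rl x))"

fun gimgf :: "gen \<Rightarrow> triad \<Rightarrow> triad list" where
  "gimgf gP (Maj n) = [Min n]"
| "gimgf gP (Min n) = [Maj n]"
| "gimgf gP (Aug k) = [Aug k]"
| "gimgf gL (Maj n) = [Min ((n + 4) mod 12)]"
| "gimgf gL (Min n) = [Maj ((n + 8) mod 12)]"
| "gimgf gL (Aug k) = [Aug k]"
| "gimgf gU (Maj n) = [Aug (n mod 4)]"
| "gimgf gU (Min n) = [Aug ((n + 3) mod 4)]"
| "gimgf gU (Aug k) = [Maj k, Maj (k + 4), Maj (k + 8),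
     Min ((k + 1) mod 4), Min ((k + 1) mod 4 + 4), Min ((k + 1) mod 4 + 8)]"

lemma gimgf_check: "list_all (\<lambda>b. list_all (\<lambda>x. set (gimgf x b) = set (gimg x b)) [gU, gP, gL]) Hlist"
  by code_simp

lemma gimgf_ok: assumes "b \<in> H" shows "set (gimgf x b) = gen_rel x `` {b}"
proof -
  have "x \<in> set [gU, gP, gL]" by (cases x) auto
  then have "set (gimgf x b) = set (gimg x b)"
    using gimgf_check assms unfolding H_eq list_all_iff by blast
  then show ?thesis by (auto simp: gimg_def rl_eq image_iff)
qed

fun img :: "gen list \<Rightarrow> triad \<Rightarrow> triad list" where
  "img [] a = (if a \<in> set Hlist then [a] else [])"
| "img (x # w) a = remdups (concat (map (gimgf x) (img w a)))"


lemma gen_sub: "gen_rel x \<subseteq> H \<times> H"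
proof -
  have "list_all (\<lambda>p. fst p \<in> set Hlist \<and> snd p \<in> set Hlist) (rl y)" for y
    by (cases y) (simp_all only: rl.simps, code_simp+)
  from this[of x] have "set (rl x) \<subseteq> set Hlist \<times> set Hlist" by (auto simp: list_all_iff)
  then show ?thesis by (simp add: rl_eq H_eq)
qed

lemma eval_sub: "eval_word w \<subseteq> H \<times> H"
  by (induction w) (use gen_sub in \<open>auto simp: comp_rel_def\<close>)

lemma img_correct: "eval_word w `` {a} = set (img w a)"
proof (induction w)
  case Nil then show ?case by (auto simp: H_eq)
next
  case (Cons x w)
  have sub: "eval_word w `` {a} \<subseteq> H" using eval_sub by blast
  have "eval_word (x # w) `` {a} = gen_rel x `` (eval_word w `` {a})"
    by (auto simp: comp_rel_def)
  also have "\<dots> = (\<Union>b\<in>eval_word w `` {a}. gen_rel x `` {b})" by blast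
  also have "\<dots> = (\<Union>b\<in>eval_word w `` {a}. set (gimgf x b))"
    using sub gimgf_ok by (intro SUP_cong) auto
  also have "\<dots> = set (img (x # w) a)"
    using Cons by simp
  finally show ?case .
qed

fun enc :: "triad \<Rightarrow> int" where
  "enc (Maj n) = 3 * n" | "enc (Min n) = 3 * n + 1" | "enc (Aug n) = 3 * n + 2"

lemma enc_eq: "enc a = enc b \<Longrightarrow> a = b"
  apply (cases a; cases b)
  apply (simp_all)
  apply presburger+
  done

lemma inj_enc: "inj enc"
  by (rule injI) (rule enc_eq)

definition fp :: "gen list \<Rightarrow> int list list" where
  "fp w = map (\<lambda>a. sorted_list_of_set (enc ` (eval_word w `` {a}))) Hlist"

definition fpc :: "gen list \<Rightarrow> int list list" where
  "fpc w = map (\<lambda>a. sort (remdups (map enc (img w a)))) Hlist"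

lemma fp_fpc: "fp w = fpc w"
  unfolding fp_def fpc_def img_correct
  by (metis sorted_list_of_set_sort_remdups set_map)

lemma fp_inj: assumes "fp v = fp w" shows "eval_word v = eval_word w"
proof -
  have fin: "finite (enc ` (eval_word u `` {a}))" for u a
  proof -
    have "eval_word u `` {a} \<subseteq> H" using eval_sub by blast
    then show ?thesis by (simp add: H_eq finite_subset)
  qed
  have "\<forall>a\<in>set Hlist. sorted_list_of_set (enc ` (eval_word v `` {a})) = sorted_list_of_set (enc ` (eval_word w `` {a}))"
    using assms unfolding fp_def map_eq_conv by blast
  then have "\<forall>a\<in>H. eval_word v `` {a} = eval_word w `` {a}"
    using fin inj_enc unfolding H_eq
    by (metis sorted_list_of_set.set_sorted_key_list_of_set inj_image_eq_iff)
  then show ?thesis using eval_sub[of v] eval_sub[of w] by blast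
qed

definition fps :: "gen list \<Rightarrow> int list list" where
  "fps w = map (\<lambda>a. sorted_list_of_set (enc ` (eval_word w `` {a}))) [Maj 0, Aug 0]"

definition fpsc :: "gen list \<Rightarrow> int list list" where
  "fpsc w = map (\<lambda>a. sort (remdups (map enc (img w a)))) [Maj 0, Aug 0]"

lemma fps_fpsc: "fps w = fpsc w"
  unfolding fps_def fpsc_def img_correct
  by (metis sorted_list_of_set_sort_remdups set_map)


lemma distinct_fps: "distinct (map fps NF)"
  unfolding fps_fpsc by code_simp

lemma distinct_NF: "distinct NF" "length NF = 40"
  by code_simp+

definition rel_list :: "(gen list \<times> gen list) list" where
  "rel_list = [([gP, gP], []),
      ([gL, gL], []),
      ([gL, gP, gL], [gP, gL, gP]),
      ([gU, gU, gU], [gU]),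
      ([gU, gP], [gU, gL]),
      ([gP, gU], [gL, gU]),
      ([gU, gU, gP, gU, gU], [gP, gU, gU, gP, gU, gU, gP]),
      ([gU, gP, gU, gP, gU, gU], [gP, gU, gP, gU, gP, gU, gU, gP]),
      ([gU, gU, gP, gU, gP, gU], [gP, gU, gU, gP, gU, gP, gU, gP])]"

lemma rel_list_eq: "upl_relations = set rel_list"
  by (simp add: upl_relations_def rel_list_def)

lemma rels_fp: "list_all (\<lambda>(l, r). fpc l = fpc r) rel_list"
  unfolding rel_list_def by code_simp

lemma rels_eval: "(l, r) \<in> upl_relations \<Longrightarrow> eval_word l = eval_word r"
  using rels_fp fp_inj unfolding rel_list_eq list_all_iff fp_fpc[symmetric] by blast

lemma eval_append: "eval_word (a @ b) = eval_word b O eval_word a"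
proof (induction a)
  case Nil
  have "eval_word b O Id_on H = eval_word b" using eval_sub[of b] by blast
  then show ?case by simp
next
  case (Cons x a) then show ?case by (simp add: comp_rel_def O_assoc)
qed

lemma cong_sound: "upl_cong v w \<Longrightarrow> eval_word v = eval_word w"
proof (induction rule: upl_cong.induct)
  case (base l r a b) then show ?case using rels_eval by (simp add: eval_append)
qed auto

definition step_ok :: "gen list \<Rightarrow> gen list \<Rightarrow> bool" where
  "step_ok u v = list_ex (\<lambda>(l, r). list_ex (\<lambda>i. take (length l) (drop i u) = l \<and>
       v = take i u @ r @ drop (i + length l) u) [0..<Suc (length u)])
     (rel_list @ map (\<lambda>(l, r). (r, l)) rel_list)"

lemma step_sound: assumes "step_ok u v" shows "upl_cong u v"
proof -
  obtain p i where p: "p \<in> set (rel_list @ map (\<lambda>(l, r). (r, l)) rel_list)"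
    and c: "(case p of (l, r) \<Rightarrow> take (length l) (drop i u) = l \<and> v = take i u @ r @ drop (i + length l) u)"
    using assms unfolding step_ok_def list_ex_iff by blast
  obtain l r where pe: "p = (l, r)" by (cases p)
  have lr: "(l, r) \<in> set (rel_list @ map (\<lambda>(l, r). (r, l)) rel_list)" using p pe by simp
  have t: "take (length l) (drop i u) = l" and v: "v = take i u @ r @ drop (i + length l) u"
    using c pe by auto
  have u: "u = take i u @ l @ drop (i + length l) u"
  proof -
    have "u = take i u @ drop i u" by simp
    also have "drop i u = take (length l) (drop i u) @ drop (length l) (drop i u)"
      by (rule append_take_drop_id[symmetric])
    also have "drop (length l) (drop i u) = drop (i + length l) u" by (simp add: add.commute)
    finally show ?thesis using t by simp
  qed
  define a where "a = take i u"
  define b where "b = drop (i + length l) u"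
  have u': "u = a @ l @ b" using u unfolding a_def b_def .
  have v': "v = a @ r @ b" using v unfolding a_def b_def .
  show ?thesis
  proof (cases "(l, r) \<in> set rel_list")
    case True
    then have "(l, r) \<in> upl_relations" using rel_list_eq by simp
    from upl_cong.base[OF this, of a b] show ?thesis unfolding u' v' .
  next
    case False
    then have "(r, l) \<in> set rel_list" using lr by auto
    then have "(r, l) \<in> upl_relations" using rel_list_eq by simp
    from upl_cong.sym[OF upl_cong.base[OF this, of a b]] show ?thesis unfolding u' v' .
  qed
qed

fun chain_ok :: "gen list list \<Rightarrow> bool" where
  "chain_ok (u # v # rest) = (step_ok u v \<and> chain_ok (v # rest))"
| "chain_ok _ = True"

lemma chain_sound: "chain_ok (u # rest) \<Longrightarrow> upl_cong u (last (u # rest))"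
proof (induction rest arbitrary: u)
  case Nil then show ?case by (simp add: upl_cong.refl)
next
  case (Cons v rest)
  from Cons.prems have s: "step_ok u v" and c: "chain_ok (v # rest)" by simp_all
  have 1: "upl_cong u v" using step_sound[OF s] .
  have 2: "upl_cong v (last (v # rest))" using Cons.IH[OF c] .
  have "last (u # v # rest) = last (v # rest)" by simp
  then show ?case using upl_cong.trans[OF 1 2] by simp
qed

definition tbl :: "gen \<Rightarrow> gen list \<Rightarrow> gen list" where
  "tbl x u = (case map_of certs (x, u) of Some p \<Rightarrow> last p | None \<Rightarrow> x # u)"

lemma cert_check: "list_all (\<lambda>u. list_all (\<lambda>x. tbl x u \<in> set NF \<and>
    (case map_of certs (x, u) of Some p \<Rightarrow> p \<noteq> [] \<and> hd p = x # u \<and> chain_ok p | None \<Rightarrow> True))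
    [gU, gP, gL]) NF"
  by code_simp

lemma tbl_ok: assumes "u \<in> set NF" shows "tbl x u \<in> set NF" "upl_cong (x # u) (tbl x u)"
proof -
  have "x \<in> set [gU, gP, gL]" by (cases x) auto
  then have c: "tbl x u \<in> set NF \<and>
    (case map_of certs (x, u) of Some p \<Rightarrow> p \<noteq> [] \<and> hd p = x # u \<and> chain_ok p | None \<Rightarrow> True)"
    using cert_check assms unfolding list_all_iff by blast
  then show "tbl x u \<in> set NF" by blast
  show "upl_cong (x # u) (tbl x u)"
  proof (cases "map_of certs (x, u)")
    case None then show ?thesis by (simp add: tbl_def upl_cong.refl)
  next
    case (Some p)
    then have "p \<noteq> []" "hd p = x # u" "chain_ok p" using c by auto
    then obtain rest where "p = (x # u) # rest" by (cases p) auto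
    then show ?thesis using chain_sound \<open>chain_ok p\<close> Some by (simp add: tbl_def)
  qed
qed

lemma cong_cons: "upl_cong v w \<Longrightarrow> upl_cong (x # v) (x # w)"
proof (induction rule: upl_cong.induct)
  case (base l r a b)
  then show ?case using upl_cong.base[of l r "x # a" b] by simp
next
  case (refl w) then show ?case by (rule upl_cong.refl)
next
  case (sym v w) then show ?case using upl_cong.sym by blast
next
  case (trans u v w) then show ?case using upl_cong.trans by blast
qed

fun nf :: "gen list \<Rightarrow> gen list" where
  "nf [] = []" | "nf (x # w) = tbl x (nf w)"

lemma nf_ok: "nf w \<in> set NF \<and> upl_cong w (nf w)"
proof (induction w)
  case Nil
  have "[] \<in> set NF" by (simp add: NF_def)
  then show ?case by (simp add: upl_cong.refl)
next
  case (Cons x w)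
  then have "upl_cong (x # w) (x # nf w)" using cong_cons by blast
  then show ?case using tbl_ok[of "nf w" x] Cons upl_cong.trans by auto
qed

lemma inj_NF: "inj_on eval_word (set NF)"
proof (rule inj_onI)
  fix u v assume "u \<in> set NF" "v \<in> set NF" "eval_word u = eval_word v"
  then have "fps u = fps v" by (simp add: fps_def)
  then show "u = v" using distinct_fps \<open>u \<in> set NF\<close> \<open>v \<in> set NF\<close>
    by (metis distinct_map inj_onD)
qed

lemma M_range: "M_UPL = range eval_word"
proof
  show "M_UPL \<subseteq> range eval_word"
  proof
    fix A assume "A \<in> M_UPL" then show "A \<in> range eval_word"
    proof (induction rule: M_UPL.induct)
      case e then show ?case by (metis eval_word.simps(1) rangeI)
    next
      case (step A G)
      then obtain w where w: "A = eval_word w" by blast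
      have "G = gen_rel gU \<or> G = gen_rel gP \<or> G = gen_rel gL"
        unfolding gen_rel.simps using step by blast
      then obtain x where "G = gen_rel x" by blast
      then have "comp_rel G A = eval_word (x # w)" using w by simp
      then show ?case by (metis rangeI)
    qed
  qed
next
  show "range eval_word \<subseteq> M_UPL"
  proof
    fix A assume "A \<in> range eval_word"
    then obtain w where "A = eval_word w" by blast
    moreover have "eval_word w \<in> M_UPL"
    proof (induction w)
      case Nil then show ?case by (simp add: M_UPL.e)
    next
      case (Cons x w)
      have "gen_rel x \<in> {relU, relP, relL}" by (cases x) auto
      then show ?case using M_UPL.step[OF Cons] by simp
    qed
    ultimately show "A \<in> M_UPL" by simp
  qed
qed

lemma range_NF: "range eval_word = eval_word ` set NF"
proof
  show "range eval_word \<subseteq> eval_word ` set NF"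
  proof
    fix A assume "A \<in> range eval_word"
    then obtain w where "A = eval_word w" by blast
    then have "A = eval_word (nf w)" using nf_ok[of w] cong_sound by blast
    then show "A \<in> eval_word ` set NF" using nf_ok by blast
  qed
qed auto

theorem mainTheorem1:
  shows "finite M_UPL \<and> card M_UPL = 40
         \<and> M_UPL = range eval_word
         \<and> (\<forall>v w. eval_word v = eval_word w \<longleftrightarrow> upl_cong v w)"
proof (intro conjI allI)
  show "finite M_UPL" unfolding M_range range_NF by simp
  show "card M_UPL = 40" unfolding M_range range_NF
    using card_image[OF inj_NF] distinct_card[OF distinct_NF(1)] distinct_NF(2) by simp
  show "M_UPL = range eval_word" by (rule M_range)
  fix v w
  show "eval_word v = eval_word w \<longleftrightarrow> upl_cong v w"
  proof
    assume "eval_word v = eval_word w"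
    moreover have "eval_word v = eval_word (nf v)" "eval_word w = eval_word (nf w)"
      using nf_ok[of v] nf_ok[of w] cong_sound by blast+
    ultimately have "eval_word (nf v) = eval_word (nf w)" by simp
    then have "nf v = nf w" using inj_NF nf_ok[of v] nf_ok[of w] by (simp add: inj_on_def)
    moreover have "upl_cong v (nf v)" "upl_cong w (nf w)" using nf_ok by blast+
    ultimately show "upl_cong v w" using upl_cong.trans upl_cong.sym by metis
  qed (rule cong_sound)
qed

end
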